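(* Let $\mathcal{E}\subseteq\mathrm{CL}(\mathbb{R})$ be hereditary. Then there exists $\mathcal{G}\subseteq C(\mathbb{R},\mathbb{R})$ such that $\mathcal{E}$ is the least element of $(\mathcal{K}_\mathcal{G},\subseteq)$.
   Context: $\mathrm{CL}(\mathbb{R})$ denotes the family of all closed subsets of $\mathbb{R}$ and $C(\mathbb{R},\mathbb{R})$ the set of all continuous functions $\mathbb{R}\to\mathbb{R}$. For $\mathcal{G}\subseteq C(\mathbb{R},\mathbb{R})$ let $R_\mathcal{G}=\{(f,E)\in C(\mathbb{R},\mathbb{R})\times\mathrm{CL}(\mathbb{R}):(\exists g\in\mathcal{G})\, f\restriction E=g\restriction E\}$. For $\mathcal{F}\subseteq C(\mathbb{R},\mathbb{R})$ put $E_\mathcal{G}(\mathcal{F})=\{E\in\mathrm{CL}(\mathbb{R}):(\forall f\in\mathcal{F})\,(f,E)\in R_\mathcal{G}\}$, and let $\mathcal{K}_\mathcal{G}=\{E_\mathcal{G}(\mathcal{F}):\mathcal{F}\subseteq C(\mathbb{R},\mathbb{R})\}$, ordered by inclusion (it is a complete lattice). A family $\mathcal{E}\subseteq\mathrm{CL}(\mathbb{R})$ is hereditary if for all $D,E\in\mathrm{CL}(\mathbb{R})$, $D\subseteq E\in\mathcal{E}$ implies $D\in\mathcal{E}$. *)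

theory Defs
  imports "HOL-Analysis.Analysis"
begin

definition CL :: "real set set" where
  "CL = {E. closed E}"

definition Cfun :: "(real \<Rightarrow> real) set" where
  "Cfun = {f. continuous_on UNIV f}"

definition R_rel :: "(real \<Rightarrow> real) set \<Rightarrow> ((real \<Rightarrow> real) \<times> real set) set" where
  "R_rel G = {(f, E). f \<in> Cfun \<and> E \<in> CL \<and> (\<exists>g\<in>G. \<forall>x\<in>E. f x = g x)}"

definition E_of :: "(real \<Rightarrow> real) set \<Rightarrow> (real \<Rightarrow> real) set \<Rightarrow> real set set" where
  "E_of G F = {E \<in> CL. \<forall>f\<in>F. (f, E) \<in> R_rel G}"

definition K_fam :: "(real \<Rightarrow> real) set \<Rightarrow> real set set set" where
  "K_fam G = {E_of G F | F. F \<subseteq> Cfun}"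

definition hereditary :: "real set set \<Rightarrow> bool" where
  "hereditary \<E> \<longleftrightarrow> (\<forall>D\<in>CL. \<forall>E\<in>CL. D \<subseteq> E \<and> E \<in> \<E> \<longrightarrow> D \<in> \<E>)"

end

theory Submission imports Defs "HOL-Library.Equipollence" "HOL-Library.Countable_Set"
begin

unbundle cardinal_syntax

lemma closed_eq_rat:
  fixes A B :: "real set"
  assumes "closed A" "closed B"
    and eq: "\<And>a b::rat. {of_rat a<..<of_rat b} \<inter> A = {} \<longleftrightarrow> {of_rat a<..<of_rat b} \<inter> B = {}"
  shows "A \<subseteq> B"
proof
  fix x assume xA: "x \<in> A"
  show "x \<in> B"
  proof (rule ccontr)
    assume "x \<notin> B"
    then obtain e where e: "e > 0" "ball x e \<subseteq> - B"
      using assms(2) open_contains_ball by (metis closed_def ComplI)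
    obtain a :: rat where a: "x - e < of_rat a" "of_rat a < x" using of_rat_dense[of "x-e" x] e by auto
    obtain b :: rat where b: "x < of_rat b" "of_rat b < x + e" using of_rat_dense[of x "x+e"] e by auto
    have "{of_rat a<..<of_rat b} \<subseteq> ball x e" using a b by (auto simp: dist_real_def)
    then have "{of_rat a<..<of_rat b} \<inter> B = {}" using e by blast
    then have "{of_rat a<..<of_rat b} \<inter> A = {}" using eq by blast
    then show False using xA a b by auto
  qed
qed

lemma cont_eq_rat:
  fixes f g :: "real \<Rightarrow> real"
  assumes "continuous_on UNIV f" "continuous_on UNIV g"
    and eq: "\<And>a b::rat. of_rat b < f (of_rat a) \<longleftrightarrow> of_rat b < g (of_rat a)"
  shows "f = g"
proof -
  have rat: "f (of_rat a) = g (of_rat a)" for a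
  proof (rule ccontr)
    assume "f (of_rat a) \<noteq> g (of_rat a)"
    then consider "f (of_rat a) < g (of_rat a)" | "g (of_rat a) < f (of_rat a)" by linarith
    then show False
    proof cases
      case 1
      then obtain b::rat where "f (of_rat a) < of_rat b" "of_rat b < g (of_rat a)" using of_rat_dense by blast
      then show False using eq[of b a] by auto
    next
      case 2
      then obtain b::rat where "g (of_rat a) < of_rat b" "of_rat b < f (of_rat a)" using of_rat_dense by blast
      then show False using eq[of b a] by auto
    qed
  qed
  have cl: "closed {x. f x = g x}"
    using assms(1,2) by (intro closed_Collect_eq) auto
  have "\<rat> \<subseteq> {x. f x = g x}" using rat by (auto elim: Rats_cases)
  then have "closure \<rat> \<subseteq> {x. f x = g x}" using cl closure_minimal by blast
  moreover have "closure (\<rat>::real set) = UNIV"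
    by (rule Rats_closure_real)
  ultimately show ?thesis by auto
qed

definition enc :: "((real set \<times> (real \<Rightarrow> real)) + real set) \<Rightarrow> (nat \<times> rat \<times> rat) set" where
  "enc t = (case t of Inl (D,f) \<Rightarrow> {(0,a,b) | a b. {of_rat a<..<of_rat b} \<inter> D = {}} \<union> {(1,a,b) | a b. of_rat b < f (of_rat a)}
     | Inr E \<Rightarrow> {(2,a,b) | a b. {of_rat a<..<of_rat b} \<inter> E = {}})"

definition Tk :: "((real set \<times> (real \<Rightarrow> real)) + real set) set" where
  "Tk = {t. case t of Inl (D,f) \<Rightarrow> closed D \<and> continuous_on UNIV f | Inr E \<Rightarrow> closed E}"

lemma inj_enc: "inj_on enc Tk"
proof (rule inj_onI)
  fix s t assume s: "s \<in> Tk" and t: "t \<in> Tk" and eq: "enc s = enc t"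
  show "s = t"
  proof (cases s)
    case (Inl p)
    obtain D f where p: "p = (D,f)" by fastforce
    show ?thesis
    proof (cases t)
      case (Inl p')
      obtain D' f' where p': "p' = (D',f')" by fastforce
      have e0: "{of_rat a<..<of_rat b} \<inter> D = {} \<longleftrightarrow> {of_rat a<..<of_rat b} \<inter> D' = {}" for a b
      proof -
        have "(0,a,b) \<in> enc s \<longleftrightarrow> (0,a,b) \<in> enc t" using eq by simp
        then show ?thesis using Inl \<open>s = Inl p\<close> p p' by (simp add: enc_def)
      qed
      have e1: "of_rat b < f (of_rat a) \<longleftrightarrow> of_rat b < f' (of_rat a)" for a b
      proof -
        have "(1,a,b) \<in> enc s \<longleftrightarrow> (1,a,b) \<in> enc t" using eq by simp
        then show ?thesis using Inl \<open>s = Inl p\<close> p p' by (simp add: enc_def)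
      qed
      have c: "closed D" "closed D'" "continuous_on UNIV f" "continuous_on UNIV f'"
        using s t Inl \<open>s = Inl p\<close> p p' by (auto simp: Tk_def)
      have "D = D'" using closed_eq_rat[OF c(1,2) e0] closed_eq_rat[OF c(2,1)] e0 by blast
      moreover have "f = f'" using cont_eq_rat[OF c(3,4) e1] .
      ultimately show ?thesis using Inl \<open>s = Inl p\<close> p p' by simp
    next
      case (Inr E)
      have "(0,0,0) \<in> enc s" using \<open>s = Inl p\<close> p by (simp add: enc_def)
      moreover have "(0,0,0) \<notin> enc t" using Inr by (simp add: enc_def)
      ultimately show ?thesis using eq by simp
    qed
  next
    case (Inr E)
    show ?thesis
    proof (cases t)
      case (Inl p)
      obtain D f where p: "p = (D,f)" by fastforce
      have "(0,0,0) \<in> enc t" using Inl p by (simp add: enc_def)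
      moreover have "(0,0,0) \<notin> enc s" using Inr by (simp add: enc_def)
      ultimately show ?thesis using eq by simp
    next
      case (Inr E')
      have e0: "{of_rat a<..<of_rat b} \<inter> E = {} \<longleftrightarrow> {of_rat a<..<of_rat b} \<inter> E' = {}" for a b
      proof -
        have "(2,a,b) \<in> enc s \<longleftrightarrow> (2,a,b) \<in> enc t" using eq by simp
        then show ?thesis using Inr \<open>s = Inr E\<close> by (simp add: enc_def)
      qed
      have c: "closed E" "closed E'" using s t Inr \<open>s = Inr E\<close> by (auto simp: Tk_def)
      have "E = E'" using closed_eq_rat[OF c(1,2) e0] closed_eq_rat[OF c(2,1)] e0 by blast
      then show ?thesis using Inr \<open>s = Inr E\<close> by simp
    qed
  qed
qed

lemma Tk_lepoll: "Tk \<lesssim> (UNIV::real set)"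
proof -
  have "Tk \<lesssim> (UNIV::(nat \<times> rat \<times> rat) set set)"
    using inj_enc unfolding lepoll_def by blast
  also have "(UNIV::(nat \<times> rat \<times> rat) set set) \<lesssim> (UNIV::nat set set)"
  proof -
    have "inj (image (to_nat :: nat \<times> rat \<times> rat \<Rightarrow> nat))"
      by (simp add: inj_image_eq_iff inj_on_def)
    then show ?thesis unfolding lepoll_def by blast
  qed
  also have "(UNIV::nat set set) \<lesssim> (UNIV::real set)"
    using nat_sets_eqpoll_reals eqpoll_imp_lepoll by blast
  finally show ?thesis .
qed

definition dd :: "real set \<Rightarrow> real \<Rightarrow> real" where
  "dd D z = (if D = {} then 1 else infdist z D)"

lemma dd_cont: "continuous_on UNIV (dd D)"
  unfolding dd_def by (cases "D = {}") (auto intro!: continuous_intros)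

lemma dd_zero: "z \<in> D \<Longrightarrow> dd D z = 0"
  unfolding dd_def by auto

lemma dd_pos: "closed D \<Longrightarrow> z \<notin> D \<Longrightarrow> dd D z > 0"
  unfolding dd_def using infdist_pos_not_in_closed by auto

lemma small_image:
  fixes x :: real and \<phi> :: "real \<Rightarrow> real"
  shows "\<exists>v. v \<notin> \<phi> ` underS (card_of (UNIV::real set)) x"
proof (rule ccontr)
  assume "\<not> ?thesis"
  then have eq: "\<phi> ` underS (card_of (UNIV::real set)) x = UNIV" by auto
  have "card_of (underS (card_of (UNIV::real set)) x) <o |UNIV::real set|"
    using card_of_underS[OF card_of_Card_order, of x UNIV] by (simp add: Field_card_of)
  moreover have "card_of (\<phi> ` underS (card_of (UNIV::real set)) x) \<le>o card_of (underS (card_of (UNIV::real set)) x)"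
    by (rule card_of_image)
  ultimately have "|UNIV::real set| <o |UNIV::real set|"
    using eq ordLeq_ordLess_trans by metis
  then show False using ordLess_irreflexive by blast
qed

lemma main:
  fixes \<E> :: "real set set"
  assumes EC: "\<E> \<subseteq> CL" and her: "hereditary \<E>"
  shows "\<exists>G \<subseteq> Cfun. E_of G Cfun = \<E>"
proof -
  obtain h :: "_ \<Rightarrow> real" where h: "inj_on h Tk"
    using Tk_lepoll unfolding lepoll_def by blast
  define r where "r = |UNIV::real set|"
  define R where "R = r - Id"
  have wo: "Well_order r" unfolding r_def by (rule card_of_Well_order)
  have Fr: "Field r = UNIV" unfolding r_def by (rule Field_card_of)
  have wfR: "wf R" using wo unfolding R_def well_order_on_def by blast
  have tot: "x \<noteq> y \<Longrightarrow> (x,y) \<in> R \<or> (y,x) \<in> R" for x y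
    using wo Fr unfolding R_def well_order_on_def linear_order_on_def total_on_def by auto
  have Rus: "{y. (y,x) \<in> R} = underS r x" for x
    unfolding R_def underS_def by auto
  have small: "\<exists>v. v \<notin> \<phi> ` {y. (y,x) \<in> R}" for x and \<phi> :: "real \<Rightarrow> real"
    using small_image[of \<phi> x] unfolding Rus r_def .
  define dec where "dec = inv_into Tk h"
  have dec: "t \<in> Tk \<Longrightarrow> dec (h t) = t" for t
    unfolding dec_def using h by simp
  define PI where "PI D f F x s \<longleftrightarrow> (\<forall>y. (y,x) \<in> R \<longrightarrow>
     (case dec y of Inr E \<Rightarrow> E \<in> CL \<longrightarrow> E \<notin> \<E> \<longrightarrow> \<not>(\<forall>z\<in>E. f z + s * dd D z = F y) | Inl _ \<Rightarrow> True))"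
    for D f and F :: "real \<Rightarrow> real" and x s
  define PE where "PE E F x c \<longleftrightarrow> (\<forall>y. (y,x) \<in> R \<longrightarrow>
     (case dec y of Inl (D,f) \<Rightarrow> D \<in> \<E> \<longrightarrow> \<not>(\<forall>z\<in>E. f z + F y * dd D z = c) | Inr _ \<Rightarrow> True))"
    for E and F :: "real \<Rightarrow> real" and x c
  define H where "H F x = (case dec x of Inl (D,f) \<Rightarrow> (SOME s. PI D f F x s) | Inr E \<Rightarrow> (SOME c. PE E F x c))"
    for F :: "real \<Rightarrow> real" and x
  define F where "F = wfrec R H"
  have PIc: "PI D f F1 x = PI D f F2 x" if "\<And>y. (y,x) \<in> R \<Longrightarrow> F1 y = F2 y" for D f F1 F2 x
    unfolding PI_def using that by (intro ext) (auto split: sum.splits)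
  have PEc: "PE E F1 x = PE E F2 x" if "\<And>y. (y,x) \<in> R \<Longrightarrow> F1 y = F2 y" for E F1 F2 x
    unfolding PE_def using that by (intro ext) (auto split: sum.splits)
  have Fx: "F x = H F x" for x
  proof -
    have "F x = H (cut F R x) x" unfolding F_def by (rule wfrec[OF wfR])
    also have "\<dots> = H F x"
      unfolding H_def using PIc[of x "cut F R x" F] PEc[of x "cut F R x" F]
      by (simp add: cut_apply split: sum.splits)
    finally show ?thesis .
  qed
  have emp: "{} \<in> \<E>" if ne: "\<E> \<noteq> {}"
  proof -
    obtain D where "D \<in> \<E>" using ne by auto
    then show ?thesis using her EC unfolding hereditary_def CL_def by auto
  qed
  have notsub: "\<not> E \<subseteq> D" if "E \<in> CL" "E \<notin> \<E>" "D \<in> \<E>" for E D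
    using her EC that unfolding hereditary_def by blast
  have P1: "PI D f F (h (Inl (D,f))) (F (h (Inl (D,f))))" if "D \<in> \<E>" and fC: "f \<in> Cfun" for D f
  proof -
    define x where "x = h (Inl (D,f))"
    have "Inl (D,f) \<in> Tk" using that EC unfolding Tk_def CL_def Cfun_def by auto
    then have dx: "dec x = Inl (D,f)" unfolding x_def by (rule dec)
    define pp where "pp E = (SOME p. p \<in> E \<and> p \<notin> D)" for E
    define \<phi> where "\<phi> y = (case dec y of Inr E \<Rightarrow> (F y - f (pp E)) / dd D (pp E) | Inl _ \<Rightarrow> 0)" for y
    obtain v where v: "v \<notin> \<phi> ` {y. (y,x) \<in> R}" using small by blast
    have "PI D f F x v"
      unfolding PI_def
    proof (intro allI impI)
      fix y assume yx: "(y,x) \<in> R"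
      show "case dec y of Inr E \<Rightarrow> E \<in> CL \<longrightarrow> E \<notin> \<E> \<longrightarrow> \<not>(\<forall>z\<in>E. f z + v * dd D z = F y) | Inl _ \<Rightarrow> True"
      proof (cases "dec y")
        case (Inr E)
        have "E \<in> CL \<longrightarrow> E \<notin> \<E> \<longrightarrow> \<not>(\<forall>z\<in>E. f z + v * dd D z = F y)"
        proof (intro impI notI)
          assume E: "E \<in> CL" "E \<notin> \<E>" and all: "\<forall>z\<in>E. f z + v * dd D z = F y"
          have "\<exists>p. p \<in> E \<and> p \<notin> D" using notsub[OF E that(1)] by auto
          then have p: "pp E \<in> E" "pp E \<notin> D" unfolding pp_def by (metis (mono_tags, lifting) someI_ex)+
          have "closed D" using that EC by (auto simp: CL_def)
          then have pos: "dd D (pp E) > 0" using dd_pos p by auto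
          have "f (pp E) + v * dd D (pp E) = F y" using all p by auto
          then have "v = \<phi> y" using pos Inr unfolding \<phi>_def by (simp add: field_simps)
          then show False using v yx by auto
        qed
        then show ?thesis using Inr by simp
      qed simp
    qed
    then have "\<exists>s. PI D f F x s" by blast
    then have "PI D f F x (SOME s. PI D f F x s)" by (rule someI_ex)
    moreover have "F x = (SOME s. PI D f F x s)" using Fx[of x] dx unfolding H_def by simp
    ultimately show ?thesis unfolding x_def by simp
  qed

  have P2: "PE E F (h (Inr E)) (F (h (Inr E)))" if E: "E \<in> CL" "E \<notin> \<E>" for E
  proof -
    define x where "x = h (Inr E)"
    have "Inr E \<in> Tk" using that unfolding Tk_def CL_def by auto
    then have dx: "dec x = Inr E" unfolding x_def by (rule dec)
    define z0 where "z0 = (SOME z. z \<in> E)"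
    define \<phi> where "\<phi> y = (case dec y of Inl (D,f) \<Rightarrow> f z0 + F y * dd D z0 | Inr _ \<Rightarrow> 0)" for y
    obtain v where v: "v \<notin> \<phi> ` {y. (y,x) \<in> R}" using small by blast
    have "PE E F x v"
      unfolding PE_def
    proof (intro allI impI)
      fix y assume yx: "(y,x) \<in> R"
      show "case dec y of Inl (D,f) \<Rightarrow> D \<in> \<E> \<longrightarrow> \<not>(\<forall>z\<in>E. f z + F y * dd D z = v) | Inr _ \<Rightarrow> True"
      proof (cases "dec y")
        case (Inl p)
        obtain D f where p: "p = (D,f)" by fastforce
        have "D \<in> \<E> \<longrightarrow> \<not>(\<forall>z\<in>E. f z + F y * dd D z = v)"
        proof (intro impI notI)
          assume D: "D \<in> \<E>" and all: "\<forall>z\<in>E. f z + F y * dd D z = v"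
          have "{} \<in> \<E>" using emp D by blast
          then have "E \<noteq> {}" using E by auto
          then have "z0 \<in> E" unfolding z0_def by (simp add: some_in_eq)
          then have "v = \<phi> y" using all Inl p unfolding \<phi>_def by simp
          then show False using v yx by auto
        qed
        then show ?thesis using Inl p by simp
      qed simp
    qed
    then have "\<exists>c. PE E F x c" by blast
    then have "PE E F x (SOME c. PE E F x c)" by (rule someI_ex)
    moreover have "F x = (SOME c. PE E F x c)" using Fx[of x] dx unfolding H_def by simp
    ultimately show ?thesis unfolding x_def by simp
  qed
  define G where "G = {(\<lambda>z. f z + F (h (Inl (D,f))) * dd D z) | D f. D \<in> \<E> \<and> f \<in> Cfun}"
  have GC: "G \<subseteq> Cfun"
  proof
    fix g assume "g \<in> G"
    then obtain D f where g: "g = (\<lambda>z. f z + F (h (Inl (D,f))) * dd D z)" "f \<in> Cfun"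
      unfolding G_def by blast
    have "continuous_on UNIV f" using g(2) by (simp add: Cfun_def)
    then have "continuous_on UNIV g" unfolding g(1)
      by (intro continuous_intros dd_cont)
    then show "g \<in> Cfun" by (simp add: Cfun_def)
  qed
  have "E_of G Cfun = \<E>"
  proof
    show "\<E> \<subseteq> E_of G Cfun"
    proof
      fix E assume E: "E \<in> \<E>"
      have "(f, E) \<in> R_rel G" if "f \<in> Cfun" for f
      proof -
        have "(\<lambda>z. f z + F (h (Inl (E,f))) * dd E z) \<in> G" unfolding G_def using E that by blast
        moreover have "\<forall>x\<in>E. f x = f x + F (h (Inl (E,f))) * dd E x" by (simp add: dd_zero)
        ultimately have "\<exists>g\<in>G. \<forall>x\<in>E. f x = g x"
          by (intro bexI[of _ "(\<lambda>z. f z + F (h (Inl (E,f))) * dd E z)"]) simp_all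
        then show ?thesis unfolding R_rel_def using that E EC by auto
      qed
      then show "E \<in> E_of G Cfun" unfolding E_of_def using E EC by blast
    qed
  next
    show "E_of G Cfun \<subseteq> \<E>"
    proof (rule ccontr)
      assume "\<not> E_of G Cfun \<subseteq> \<E>"
      then obtain E where E: "E \<in> E_of G Cfun" "E \<notin> \<E>" by blast
      then have EC': "E \<in> CL" unfolding E_of_def by blast
      define x where "x = h (Inr E)"
      define c where "c = F x"
      have "(\<lambda>_. c) \<in> Cfun" by (simp add: Cfun_def)
      then have "((\<lambda>_. c), E) \<in> R_rel G" using E unfolding E_of_def by blast
      then obtain g where "g \<in> G" and ag: "\<forall>z\<in>E. c = g z" unfolding R_rel_def by blast
      then obtain D f where g: "g = (\<lambda>z. f z + F (h (Inl (D,f))) * dd D z)" "D \<in> \<E>" "f \<in> Cfun"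
        unfolding G_def by blast
      define x' where "x' = h (Inl (D,f))"
      have T1: "Inl (D,f) \<in> Tk" using g EC unfolding Tk_def CL_def Cfun_def by auto
      have T2: "Inr E \<in> Tk" using EC' unfolding Tk_def CL_def by auto
      have dx: "dec x = Inr E" unfolding x_def using T2 by (rule dec)
      have dx': "dec x' = Inl (D,f)" unfolding x'_def using T1 by (rule dec)
      have "x \<noteq> x'" using h T1 T2 unfolding x_def x'_def inj_on_def by blast
      then consider "(x',x) \<in> R" | "(x,x') \<in> R" using tot by blast
      then show False
      proof cases
        case 1
        have "PE E F x (F x)" using P2[OF EC' E(2)] unfolding x_def .
        then have "\<not>(\<forall>z\<in>E. f z + F x' * dd D z = F x)" using 1 dx' g(2) unfolding PE_def by fastforce
        then show False using ag g(1) unfolding c_def x'_def by auto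
      next
        case 2
        have "PI D f F x' (F x')" using P1[OF g(2,3)] unfolding x'_def .
        then have "\<not>(\<forall>z\<in>E. f z + F x' * dd D z = F x)" using 2 dx EC' E(2) unfolding PI_def by fastforce
        then show False using ag g(1) unfolding c_def x'_def by auto
      qed
    qed
  qed
  then show ?thesis using GC by blast
qed

theorem theorem2p5:
  assumes "\<E> \<subseteq> CL" and "hereditary \<E>"
  shows "\<exists>G \<subseteq> Cfun. \<E> \<in> K_fam G \<and> (\<forall>K\<in>K_fam G. \<E> \<subseteq> K)"
proof -
  obtain G where G: "G \<subseteq> Cfun" "E_of G Cfun = \<E>" using main[OF assms] by blast
  have "\<E> \<in> K_fam G" unfolding K_fam_def using G(2) by blast
  moreover have "\<forall>K\<in>K_fam G. \<E> \<subseteq> K"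
  proof
    fix K assume "K \<in> K_fam G"
    then obtain F where F: "K = E_of G F" "F \<subseteq> Cfun" unfolding K_fam_def by blast
    show "\<E> \<subseteq> K" using F G(2)[symmetric] unfolding E_of_def by blast
  qed
  ultimately show ?thesis using G(1) by blast
qed

end
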